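(* Let $k\ge2$, let $c>0$ and $\lambda\ne0$ be real, let $0<\delta\le 1$, let $N$ be sufficiently large in terms of $k,c,\lambda$, and write $P=N^{1/k}$. Suppose that $M\le|\lambda|(k-1)(cP)^{k-1}$. Let $\mathcal Z\subseteq[N,N+M]$ be measurable of measure $Z$ and $\eta:\mathcal Z\to\mathbb C$ measurable with $|\eta_\mu|=1$ for all $\mu\in\mathcal Z$. Then $$\int_{-\infty}^{\infty}|f^{(c)}(\lambda\alpha)H_{\eta,\mathcal Z}(\alpha)|^2K_1(\alpha)\,d\alpha\le 2PZ.$$
   Context: $e(z)=e^{2\pi iz}$; $f^{(c)}(\alpha)=\sum_{cP<x\le P,\ x\in\mathbb Z}e(\alpha x^k)$; $K_1(\alpha)=\big(\sin(\pi\delta\alpha)/(\pi\delta\alpha)\big)^2$; $H_{\eta,\mathcal Z}(\alpha)=\int_{\mathcal Z}\eta_\mu e(-\alpha\mu)\,d\mu$. *)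

theory Defs
  imports "HOL-Analysis.Analysis"
begin

definition e :: "real \<Rightarrow> complex" where
  "e z = exp (2 * of_real pi * \<i> * of_real z)"

definition fc :: "nat \<Rightarrow> real \<Rightarrow> real \<Rightarrow> real \<Rightarrow> complex" where
  "fc k c P \<alpha> = (\<Sum>x\<in>{x::int. c * P < of_int x \<and> of_int x \<le> P}. e (\<alpha> * of_int x ^ k))"

definition K1 :: "real \<Rightarrow> real \<Rightarrow> real" where
  "K1 \<delta> \<alpha> = (if \<alpha> = 0 then 1 else (sin (pi * \<delta> * \<alpha>) / (pi * \<delta> * \<alpha>))\<^sup>2)"

definition H :: "(real \<Rightarrow> complex) \<Rightarrow> real set \<Rightarrow> real \<Rightarrow> complex" where
  "H \<eta> Z \<alpha> = (LINT \<mu>:Z|lebesgue. \<eta> \<mu> * e (- \<alpha> * \<mu>))"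

end

theory Submission
  imports Defs "HOL-Probability.Probability"
begin


lemma e_iexp: "e z = iexp (2*pi*z)"
  unfolding e_def by (simp add: mult_ac)

lemma gauss_ft:
  fixes r u :: real assumes r: "r > 0"
  shows "(\<integral>\<alpha>. complex_of_real (exp (-(\<alpha>/r)\<^sup>2/2)) * e (-\<alpha>*u) \<partial>lborel)
       = complex_of_real (normal_density 0 (1/(2*pi * r)) u)"
proof -
  define t where "t = -2*pi * r*u"
  have ch: "(\<integral>x. std_normal_density x *\<^sub>R iexp (t*x) \<partial>lborel) = complex_of_real (exp (-(t^2)/2))"
  proof -
    have "char std_normal_distribution t = complex_of_real (exp (-(t^2)/2))"
      by (simp add: char_std_normal_distribution)
    then show ?thesis unfolding char_def
      by (subst (asm) integral_density) (auto)
  qed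
  have "(\<integral>\<alpha>. complex_of_real (exp (-(\<alpha>/r)\<^sup>2/2)) * e (-\<alpha>*u) \<partial>lborel)
      = \<bar>r\<bar> *\<^sub>R (\<integral>x. complex_of_real (exp (-((0 + r*x)/r)\<^sup>2/2)) * e (-(0+r*x)*u) \<partial>lborel)"
    by (rule lborel_integral_real_affine) (use r in auto)
  also have "(\<lambda>x. complex_of_real (exp (-((0 + r*x)/r)\<^sup>2/2)) * e (-(0+r*x)*u))
     = (\<lambda>x. complex_of_real (sqrt (2*pi)) * (std_normal_density x *\<^sub>R iexp (t*x)))"
    using r by (auto simp: std_normal_density_def e_iexp t_def scaleR_conv_of_real mult_ac)
  also have "(\<integral>x. complex_of_real (sqrt (2*pi)) * (std_normal_density x *\<^sub>R iexp (t*x)) \<partial>lborel)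
      = complex_of_real (sqrt (2*pi)) * complex_of_real (exp (-(t^2)/2))"
    by (subst integral_mult_right_zero) (use ch in simp)
  finally have 1: "(\<integral>\<alpha>. complex_of_real (exp (-(\<alpha>/r)\<^sup>2/2)) * e (-\<alpha>*u) \<partial>lborel)
      = complex_of_real (r * sqrt (2*pi) * exp (-(t^2)/2))"
    using r by (simp add: scaleR_conv_of_real)
  have "normal_density 0 (1/(2*pi * r)) u = r * sqrt (2*pi) * exp (-(t^2)/2)"
  proof -
    have a: "sqrt (2 * pi * (1 / (2 * pi * r))\<^sup>2) = 1/(r * sqrt (2*pi))"
      using r by (simp add: real_sqrt_divide real_sqrt_mult power_divide power_mult_distrib)
          (simp add: field_simps real_sqrt_mult)
    have b: "(u - 0)\<^sup>2 / (2 * (1 / (2 * pi * r))\<^sup>2) = t^2/2"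
      using r by (simp add: t_def power_divide power_mult_distrib)
    show ?thesis using r by (simp add: normal_density_def a) (simp add: t_def power_divide power_mult_distrib)
  qed
  with 1 show ?thesis by simp
qed

lemma e_meas[measurable]: "e \<in> borel_measurable borel"
  unfolding e_def by (intro borel_measurable_continuous_onI continuous_intros)

lemma e_meas'[measurable (raw)]: "f \<in> borel_measurable M \<Longrightarrow> (\<lambda>x. e (f x)) \<in> borel_measurable M"
  by (rule measurable_compose[OF _ e_meas])

lemma cnj_meas[measurable (raw)]: "f \<in> borel_measurable M \<Longrightarrow> (\<lambda>x. cnj (f x :: complex)) \<in> borel_measurable M"
  by (rule measurable_compose[OF _ borel_measurable_continuous_onI[OF continuous_on_cnj[OF continuous_on_id]]])

lemma cmod_e[simp]: "cmod (e x) = 1"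
  unfolding e_iexp by (simp del: of_real_mult)

lemma cnj_e[simp]: "cnj (e x) = e (-x)"
  unfolding e_def by (simp add: exp_cnj)

lemma e_add: "e x * e y = e (x + y)"
  unfolding e_def by (simp add: exp_add[symmetric] algebra_simps)

lemma prod_integrable:
  fixes f :: "real \<Rightarrow> real \<Rightarrow> complex"
  assumes fm[measurable]: "case_prod f \<in> borel_measurable (lborel \<Otimes>\<^sub>M lborel)"
    and ai: "integrable lborel a" and bi: "integrable lborel b"
    and a0: "\<And>x. 0 \<le> a x" and b0: "\<And>y. 0 \<le> b y"
    and fb: "\<And>x y. cmod (f x y) \<le> a x * b y"
  shows "integrable (lborel \<Otimes>\<^sub>M lborel) (case_prod f)"
proof (rule lborel_pair.Fubini_integrable)
  show "case_prod f \<in> borel_measurable (lborel \<Otimes>\<^sub>M lborel)" by fact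
  have am[measurable]: "a \<in> borel_measurable lborel" using ai by (rule borel_measurable_integrable)
  have bm[measurable]: "b \<in> borel_measurable lborel" using bi by (rule borel_measurable_integrable)
  have fxm[measurable]: "(\<lambda>y. f x y) \<in> borel_measurable lborel" for x
    by measurable
  have fxi: "integrable lborel (\<lambda>y. f x y)" for x
  proof -
    have "integrable lborel (\<lambda>y. a x * b y)" using bi by simp
    then show ?thesis
      by (rule Bochner_Integration.integrable_bound) (use fb a0 b0 in \<open>auto intro!: AE_I2 order.trans[OF fb] simp: abs_mult\<close>)
  qed
  then show "AE x in lborel. integrable lborel (\<lambda>y. case_prod f (x, y))" by simp
  show "integrable lborel (\<lambda>x. \<integral>y. norm (case_prod f (x, y)) \<partial>lborel)"
  proof (rule Bochner_Integration.integrable_bound[where f="\<lambda>x. a x * (\<integral>y. b y \<partial>lborel)"])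
    show "integrable lborel (\<lambda>x. a x * (\<integral>y. b y \<partial>lborel))" using ai by simp
    show "(\<lambda>x. \<integral>y. norm (case_prod f (x, y)) \<partial>lborel) \<in> borel_measurable lborel"
      by measurable
    show "AE x in lborel. norm (\<integral>y. norm (case_prod f (x, y)) \<partial>lborel) \<le> norm (a x * (\<integral>y. b y \<partial>lborel))"
    proof (intro AE_I2)
      fix x
      have "(\<integral>y. norm (f x y) \<partial>lborel) \<le> (\<integral>y. a x * b y \<partial>lborel)"
        using fxi bi fb by (intro integral_mono) auto
      moreover have "0 \<le> (\<integral>y. norm (f x y) \<partial>lborel)" by simp
      moreover have "0 \<le> (\<integral>y. b y \<partial>lborel)" using b0 by simp
      ultimately show "norm (\<integral>y. norm (case_prod f (x, y)) \<partial>lborel) \<le> norm (a x * (\<integral>y. b y \<partial>lborel))"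
        using a0[of x] by (simp add: abs_mult)
    qed
  qed
qed

lemma int_cgd:
  fixes g :: "real \<Rightarrow> complex"
  shows "(\<integral>t. c * g t * d \<partial>M) = c * (\<integral>t. g t \<partial>M) * d"
  by (simp add: integral_mult_right_zero integral_mult_left_zero)

lemma core_pre:
  fixes w :: "real \<Rightarrow> complex" and r :: real
  assumes r: "r > 0" and wm[measurable]: "w \<in> borel_measurable lborel"
    and wi: "integrable lborel w" and wb: "\<And>t. cmod (w t) \<le> 1"
  shows "integrable lborel (\<lambda>\<alpha>. exp (-(\<alpha>/r)\<^sup>2/2) * (cmod (\<integral>t. w t * e (-\<alpha>*t) \<partial>lborel))\<^sup>2)"
    and "(\<integral>\<alpha>. exp (-(\<alpha>/r)\<^sup>2/2) * (cmod (\<integral>t. w t * e (-\<alpha>*t) \<partial>lborel))\<^sup>2 \<partial>lborel) \<le> (\<integral>t. cmod (w t) \<partial>lborel)"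
proof -
  define F where "F \<alpha> = (\<integral>t. w t * e (-\<alpha>*t) \<partial>lborel)" for \<alpha>
  define \<rho> where "\<rho> \<alpha> = exp (-(\<alpha>/r)\<^sup>2/2)" for \<alpha>
  define \<sigma> where "\<sigma> = 1/(2*pi * r)"
  define L where "L = (\<integral>t. cmod (w t) \<partial>lborel)"
  have Fm[measurable]: "F \<in> borel_measurable lborel" unfolding F_def by measurable
  have \<rho>m[measurable]: "\<rho> \<in> borel_measurable lborel" unfolding \<rho>_def by measurable
  have \<rho>pos: "0 \<le> \<rho> \<alpha>" for \<alpha> unfolding \<rho>_def by simp
  have \<rho>i: "integrable lborel \<rho>"
  proof -
    have "\<rho> = (\<lambda>\<alpha>. (r * sqrt (2*pi)) * normal_density 0 r \<alpha>)"
      using r by (auto simp: \<rho>_def normal_density_def fun_eq_iff real_sqrt_mult power_divide)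
    then show ?thesis using r by simp
  qed
  have wn: "integrable lborel (\<lambda>t. cmod (w t))" using wi by simp
  have FL: "cmod (F \<alpha>) \<le> L" for \<alpha>
    unfolding F_def L_def
    by (rule order.trans[OF integral_norm_bound]) (simp add: norm_mult)
  have Gft: "(\<integral>\<alpha>. complex_of_real (\<rho> \<alpha>) * e (-\<alpha>*u) \<partial>lborel) = complex_of_real (normal_density 0 \<sigma> u)" for u
    unfolding \<rho>_def \<sigma>_def by (rule gauss_ft[OF r])
  have Gm[measurable]: "(\<lambda>x. normal_density 0 \<sigma> x) \<in> borel_measurable borel" by measurable
  have G_sw: "normal_density 0 \<sigma> (t - s) = normal_density t \<sigma> s" for t s
    unfolding normal_density_def by (simp add: power2_commute)
  have \<sigma>pos: "\<sigma> > 0" unfolding \<sigma>_def using r by simp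
  define J where "J t = (\<integral>\<alpha>. complex_of_real (\<rho> \<alpha>) * e (-\<alpha>*t) * cnj (F \<alpha>) \<partial>lborel)" for t
  have J_eq: "J t = (\<integral>s. cnj (w s) * complex_of_real (normal_density 0 \<sigma> (t - s)) \<partial>lborel)" for t
  proof -
    define f2 where "f2 \<alpha> s = complex_of_real (\<rho> \<alpha>) * cnj (w s) * e (-\<alpha>*(t - s))" for \<alpha> s
    have f2m[measurable]: "case_prod f2 \<in> borel_measurable (lborel \<Otimes>\<^sub>M lborel)"
      unfolding f2_def by measurable
    have f2i: "integrable (lborel \<Otimes>\<^sub>M lborel) (case_prod f2)"
      by (rule prod_integrable[OF f2m \<rho>i wn \<rho>pos]) (auto simp: f2_def norm_mult \<rho>pos)
    have "J t = (\<integral>\<alpha>. (\<integral>s. f2 \<alpha> s \<partial>lborel) \<partial>lborel)"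
    proof -
      have "complex_of_real (\<rho> \<alpha>) * e (-\<alpha>*t) * cnj (F \<alpha>) = (\<integral>s. f2 \<alpha> s \<partial>lborel)" for \<alpha>
      proof -
        have "cnj (F \<alpha>) = (\<integral>s. cnj (w s) * e (\<alpha> * s) \<partial>lborel)"
          unfolding F_def by (subst Bochner_Integration.integral_cnj[symmetric]) simp
        then have "complex_of_real (\<rho> \<alpha>) * e (-\<alpha>*t) * cnj (F \<alpha>)
           = complex_of_real (\<rho> \<alpha>) * e (-\<alpha>*t) * (\<integral>s. cnj (w s) * e (\<alpha> * s) \<partial>lborel)" by simp
        also have "\<dots> = (\<integral>s. complex_of_real (\<rho> \<alpha>) * e (-\<alpha>*t) * (cnj (w s) * e (\<alpha> * s)) \<partial>lborel)"
          by (simp add: integral_mult_right_zero)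
        also have "\<dots> = (\<integral>s. f2 \<alpha> s \<partial>lborel)"
          by (rule Bochner_Integration.integral_cong)
             (auto simp: f2_def mult_ac e_add algebra_simps)
        finally show ?thesis .
      qed
      then show ?thesis unfolding J_def by simp
    qed
    also have "\<dots> = (\<integral>s. (\<integral>\<alpha>. f2 \<alpha> s \<partial>lborel) \<partial>lborel)"
      using lborel_pair.Fubini_integral[OF f2i] by simp
    also have "\<dots> = (\<integral>s. cnj (w s) * complex_of_real (normal_density 0 \<sigma> (t - s)) \<partial>lborel)"
    proof (rule Bochner_Integration.integral_cong)
      fix s
      have "(\<integral>\<alpha>. f2 \<alpha> s \<partial>lborel) = cnj (w s) * (\<integral>\<alpha>. complex_of_real (\<rho> \<alpha>) * e (-\<alpha>*(t - s)) \<partial>lborel)"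
        unfolding f2_def by (subst integral_mult_right_zero[symmetric]) (simp add: mult_ac)
      then show "(\<integral>\<alpha>. f2 \<alpha> s \<partial>lborel) = cnj (w s) * complex_of_real (normal_density 0 \<sigma> (t - s))"
        using Gft[of "t - s"] by simp
    qed simp
    finally show ?thesis .
  qed
  have Jm[measurable]: "J \<in> borel_measurable lborel"
  proof -
    have "(\<lambda>t. \<integral>s. cnj (w s) * complex_of_real (normal_density 0 \<sigma> (t - s)) \<partial>lborel) \<in> borel_measurable lborel"
      by measurable
    then show ?thesis by (simp add: J_eq[abs_def])
  qed
  have Jb: "cmod (J t) \<le> 1" for t
  proof -
    have "cmod (J t) \<le> (\<integral>s. normal_density t \<sigma> s \<partial>lborel)"
      unfolding J_eq
    proof (rule Bochner_Integration.integral_norm_bound_integral)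
      show "integrable lborel (normal_density t \<sigma>)" using \<sigma>pos by simp
      then show "integrable lborel (\<lambda>s. cnj (w s) * complex_of_real (normal_density 0 \<sigma> (t - s)))"
        by (rule Bochner_Integration.integrable_bound)
           (auto simp: G_sw norm_mult intro!: AE_I2 mult_left_le_one_le wb)
      show "norm (cnj (w s) * complex_of_real (normal_density 0 \<sigma> (t - s))) \<le> normal_density t \<sigma> s" for s
        by (auto simp: G_sw norm_mult intro!: mult_left_le_one_le wb)
    qed
    then show ?thesis using \<sigma>pos by simp
  qed
  define f1 where "f1 \<alpha> t = w t * (complex_of_real (\<rho> \<alpha>) * e (-\<alpha>*t) * cnj (F \<alpha>))" for \<alpha> t
  have f1m[measurable]: "case_prod f1 \<in> borel_measurable (lborel \<Otimes>\<^sub>M lborel)"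
    unfolding f1_def by measurable
  have f1i: "integrable (lborel \<Otimes>\<^sub>M lborel) (case_prod f1)"
  proof (rule prod_integrable[OF f1m _ wn])
    show "integrable lborel (\<lambda>\<alpha>. \<rho> \<alpha> * L)" using \<rho>i by simp
    show "0 \<le> \<rho> x * L" for x unfolding L_def using \<rho>pos by simp
    show "cmod (f1 x y) \<le> \<rho> x * L * cmod (w y)" for x y
      using FL[of x] \<rho>pos[of x]
    proof -
      have "\<rho> x * (cmod (F x) * cmod (w y)) \<le> \<rho> x * (L * cmod (w y))"
        using FL[of x] \<rho>pos[of x] by (intro mult_left_mono mult_right_mono) auto
      then show ?thesis using \<rho>pos[of x] by (simp add: f1_def norm_mult mult_ac)
    qed
  qed simp
  have A: "(\<integral>\<alpha>. complex_of_real (\<rho> \<alpha>) * (F \<alpha> * cnj (F \<alpha>)) \<partial>lborel) = (\<integral>t. w t * J t \<partial>lborel)"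
  proof -
    have "(\<integral>\<alpha>. complex_of_real (\<rho> \<alpha>) * (F \<alpha> * cnj (F \<alpha>)) \<partial>lborel) = (\<integral>\<alpha>. (\<integral>t. f1 \<alpha> t \<partial>lborel) \<partial>lborel)"
    proof (rule Bochner_Integration.integral_cong)
      fix \<alpha>
      have "(\<integral>t. f1 \<alpha> t \<partial>lborel) = (\<integral>t. complex_of_real (\<rho> \<alpha>) * (w t * e (-\<alpha>*t)) * cnj (F \<alpha>) \<partial>lborel)"
        by (rule Bochner_Integration.integral_cong) (auto simp: f1_def mult_ac)
      also have "\<dots> = complex_of_real (\<rho> \<alpha>) * F \<alpha> * cnj (F \<alpha>)"
        unfolding int_cgd F_def ..
      finally show "complex_of_real (\<rho> \<alpha>) * (F \<alpha> * cnj (F \<alpha>)) = (\<integral>t. f1 \<alpha> t \<partial>lborel)"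
        by (simp add: mult_ac)
    qed simp
    also have "\<dots> = (\<integral>t. (\<integral>\<alpha>. f1 \<alpha> t \<partial>lborel) \<partial>lborel)"
      using lborel_pair.Fubini_integral[OF f1i] by simp
    also have "\<dots> = (\<integral>t. w t * J t \<partial>lborel)"
      by (rule Bochner_Integration.integral_cong) (auto simp: f1_def J_def integral_mult_right_zero)
    finally show ?thesis .
  qed
  have LHSi: "integrable lborel (\<lambda>\<alpha>. \<rho> \<alpha> * (cmod (F \<alpha>))\<^sup>2)"
  proof -
    have "integrable lborel (\<lambda>\<alpha>. \<rho> \<alpha> * L\<^sup>2)" using \<rho>i by simp
    then show ?thesis
      by (rule Bochner_Integration.integrable_bound)
         (auto intro!: AE_I2 mult_left_mono power_mono FL simp: abs_mult \<rho>pos)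
  qed
  then show "integrable lborel (\<lambda>\<alpha>. exp (-(\<alpha>/r)\<^sup>2/2) * (cmod (\<integral>t. w t * e (-\<alpha>*t) \<partial>lborel))\<^sup>2)"
    unfolding \<rho>_def F_def .
  have wJi: "integrable lborel (\<lambda>t. w t * J t)"
    using wn by (rule Bochner_Integration.integrable_bound)
       (auto intro!: AE_I2 mult_left_le simp: norm_mult Jb)
  have "(\<integral>\<alpha>. \<rho> \<alpha> * (cmod (F \<alpha>))\<^sup>2 \<partial>lborel) = cmod (complex_of_real (\<integral>\<alpha>. \<rho> \<alpha> * (cmod (F \<alpha>))\<^sup>2 \<partial>lborel))"
    using \<rho>pos by simp
  also have "complex_of_real (\<integral>\<alpha>. \<rho> \<alpha> * (cmod (F \<alpha>))\<^sup>2 \<partial>lborel) = (\<integral>t. w t * J t \<partial>lborel)"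
    unfolding A[symmetric] integral_complex_of_real[symmetric]
    by (simp flip: complex_norm_square)
  also have "cmod (\<integral>t. w t * J t \<partial>lborel) \<le> (\<integral>t. cmod (w t) \<partial>lborel)"
    using wJi wn by (rule Bochner_Integration.integral_norm_bound_integral) (auto simp: norm_mult intro!: mult_left_le Jb)
  finally show "(\<integral>\<alpha>. exp (-(\<alpha>/r)\<^sup>2/2) * (cmod (\<integral>t. w t * e (-\<alpha>*t) \<partial>lborel))\<^sup>2 \<partial>lborel) \<le> (\<integral>t. cmod (w t) \<partial>lborel)"
    unfolding \<rho>_def F_def .
qed

lemma core:
  fixes w :: "real \<Rightarrow> complex"
  assumes wm[measurable]: "w \<in> borel_measurable lborel"
    and wi: "integrable lborel w" and wb: "\<And>t. cmod (w t) \<le> 1"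
  shows "(\<integral>\<^sup>+\<alpha>. ennreal ((cmod (\<integral>t. w t * e (-\<alpha>*t) \<partial>lborel))\<^sup>2) \<partial>lborel) \<le> ennreal (\<integral>t. cmod (w t) \<partial>lborel)"
proof -
  define F where "F \<alpha> = (\<integral>t. w t * e (-\<alpha>*t) \<partial>lborel)" for \<alpha>
  define L where "L = (\<integral>t. cmod (w t) \<partial>lborel)"
  define u where "u n \<alpha> = ennreal (exp (-(\<alpha>/real (Suc n))\<^sup>2/2) * (cmod (F \<alpha>))\<^sup>2)" for n \<alpha>
  have Fm[measurable]: "F \<in> borel_measurable lborel" unfolding F_def by measurable
  have um[measurable]: "u n \<in> borel_measurable lborel" for n unfolding u_def by measurable
  have lim: "liminf (\<lambda>n. u n \<alpha>) = ennreal ((cmod (F \<alpha>))\<^sup>2)" for \<alpha>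
  proof (rule lim_imp_Liminf)
    have "(\<lambda>n. \<alpha> / real (Suc n)) \<longlonglongrightarrow> 0"
      using LIMSEQ_Suc[OF lim_const_over_n[of \<alpha>]] by simp
    then have "(\<lambda>n. exp (-(\<alpha>/real (Suc n))\<^sup>2/2) * (cmod (F \<alpha>))\<^sup>2) \<longlonglongrightarrow> exp (-(0)\<^sup>2/2) * (cmod (F \<alpha>))\<^sup>2"
      by (intro tendsto_intros) auto
    then show "(\<lambda>n. u n \<alpha>) \<longlonglongrightarrow> ennreal ((cmod (F \<alpha>))\<^sup>2)"
      unfolding u_def by (intro tendsto_ennrealI) simp
  qed simp
  have bnd: "integral\<^sup>N lborel (u n) \<le> ennreal L" for n
  proof -
    have r: "real (Suc n) > 0" by simp
    have "integral\<^sup>N lborel (u n) = ennreal (\<integral>\<alpha>. exp (-(\<alpha>/real (Suc n))\<^sup>2/2) * (cmod (F \<alpha>))\<^sup>2 \<partial>lborel)"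
      unfolding u_def F_def
      by (rule nn_integral_eq_integral[OF core_pre(1)[OF r wm wi wb]]) simp
    also have "\<dots> \<le> ennreal L"
      unfolding F_def L_def by (rule ennreal_leI, rule core_pre(2)[OF r wm wi wb])
    finally show ?thesis .
  qed
  have "(\<integral>\<^sup>+\<alpha>. ennreal ((cmod (F \<alpha>))\<^sup>2) \<partial>lborel) = (\<integral>\<^sup>+\<alpha>. liminf (\<lambda>n. u n \<alpha>) \<partial>lborel)"
    by (simp add: lim)
  also have "\<dots> \<le> liminf (\<lambda>n. integral\<^sup>N lborel (u n))"
    by (rule nn_integral_liminf) simp
  also have "\<dots> \<le> ennreal L"
    by (rule Liminf_le) (auto simp: bnd)
  finally show ?thesis unfolding F_def L_def .
qed

lemma id_leb: "(\<lambda>x::real. x) \<in> borel_measurable lebesgue"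
  by (rule measurable_completion) simp

lemma core_leb:
  fixes w0 :: "real \<Rightarrow> complex"
  assumes wm[measurable]: "w0 \<in> borel_measurable lebesgue"
    and wi: "integrable lebesgue w0" and wb: "\<And>t. cmod (w0 t) \<le> 1"
  shows "(\<integral>\<^sup>+\<alpha>. ennreal ((cmod (\<integral>t. w0 t * e (-\<alpha>*t) \<partial>lebesgue))\<^sup>2) \<partial>lborel) \<le> ennreal (\<integral>t. cmod (w0 t) \<partial>lebesgue)"
proof -
  have "(\<lambda>t. Re (w0 t)) \<in> borel_measurable lebesgue" by measurable
  then obtain g1 where g1[measurable]: "g1 \<in> borel_measurable lborel" and ae1: "AE t in lborel. Re (w0 t) = g1 t"
    using completion_ex_borel_measurable_real by blast
  have "(\<lambda>t. Im (w0 t)) \<in> borel_measurable lebesgue" by measurable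
  then obtain g2 where g2[measurable]: "g2 \<in> borel_measurable lborel" and ae2: "AE t in lborel. Im (w0 t) = g2 t"
    using completion_ex_borel_measurable_real by blast
  define w where "w t = (if cmod ((complex_of_real (g1 t) + \<i> * complex_of_real (g2 t))) \<le> 1 then (complex_of_real (g1 t) + \<i> * complex_of_real (g2 t)) else 0)" for t
  have w_m[measurable]: "w \<in> borel_measurable lborel" unfolding w_def by measurable
  have m1: "(\<lambda>t. w t * e (-\<alpha>*t)) \<in> borel_measurable lborel" for \<alpha> by measurable
  have m2: "(\<lambda>t. cmod (w t)) \<in> borel_measurable lborel" by measurable
  have aeb: "AE t in lborel. w0 t = w t"
    using ae1 ae2 proof eventually_elim
    case (elim t)
    then have "w0 t = (complex_of_real (g1 t) + \<i> * complex_of_real (g2 t))" by (simp add: complex_eq_iff)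
    then show ?case using wb[of t] by (simp add: w_def)
  qed
  then have ael: "AE t in lebesgue. w0 t = w t" by (rule AE_completion)
  have w_m': "w \<in> borel_measurable lebesgue" by (rule measurable_completion[OF w_m])
  have wb': "cmod (w t) \<le> 1" for t by (simp add: w_def)
  have wi': "integrable lborel w"
  proof -
    have "integrable lebesgue w" using wi measurable_completion[OF w_m] ael by (rule integrable_cong_AE_imp)
    then show ?thesis using integrable_completion[OF w_m] by simp
  qed
  have eqF: "(\<integral>t. w0 t * e (-\<alpha>*t) \<partial>lebesgue) = (\<integral>t. w t * e (-\<alpha>*t) \<partial>lborel)" for \<alpha>
  proof -
    have em: "(\<lambda>t. e (-\<alpha>*t)) \<in> borel_measurable lebesgue"
      by (rule measurable_completion) measurable
    have "(\<integral>t. w0 t * e (-\<alpha>*t) \<partial>lebesgue) = (\<integral>t. w t * e (-\<alpha>*t) \<partial>lebesgue)"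
      using ael by (intro integral_cong_AE borel_measurable_times wm w_m' em) (auto elim!: eventually_mono)
    also have "\<dots> = (\<integral>t. w t * e (-\<alpha>*t) \<partial>lborel)"
      by (rule integral_completion[OF m1])
    finally show ?thesis .
  qed
  have eqL: "(\<integral>t. cmod (w0 t) \<partial>lebesgue) = (\<integral>t. cmod (w t) \<partial>lborel)"
  proof -
    have "(\<integral>t. cmod (w0 t) \<partial>lebesgue) = (\<integral>t. cmod (w t) \<partial>lebesgue)"
      using ael by (intro integral_cong_AE measurable_completion[OF m2]) (auto elim!: eventually_mono)
    also have "\<dots> = (\<integral>t. cmod (w t) \<partial>lborel)"
      by (rule integral_completion[OF m2])
    finally show ?thesis .
  qed
  show ?thesis unfolding eqF eqL by (rule core[OF w_m wi' wb'])
qed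



lemma bern:
  fixes x :: real assumes "x \<ge> 0"
  shows "(x + 1) ^ Suc m \<ge> x ^ Suc m + real (Suc m) * x ^ m"
proof (induction m)
  case 0 then show ?case by simp
next
  case (Suc m)
  have "(x + 1) ^ Suc (Suc m) = (x + 1) * (x + 1) ^ Suc m" by simp
  also have "\<dots> \<ge> (x + 1) * (x ^ Suc m + real (Suc m) * x ^ m)"
    using Suc assms by (intro mult_left_mono) auto
  finally have 1: "(x + 1) ^ Suc (Suc m) \<ge> (x + 1) * (x ^ Suc m + real (Suc m) * x ^ m)" .
  have "(x + 1) * (x ^ Suc m + real (Suc m) * x ^ m) = x ^ Suc (Suc m) + real (Suc (Suc m)) * x ^ Suc m + real (Suc m) * x ^ m"
    by (simp add: algebra_simps)
  also have "\<dots> \<ge> x ^ Suc (Suc m) + real (Suc (Suc m)) * x ^ Suc m"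
    using assms by simp
  finally show ?case using 1 by linarith
qed

lemma gap:
  fixes x y :: int and b :: real
  assumes b: "b > 0" "b < of_int x" and xy: "x < y" and k: "k \<ge> 1"
  shows "real_of_int y ^ k - real_of_int x ^ k \<ge> real k * b ^ (k - 1)"
proof -
  obtain m where m: "k = Suc m" using k by (cases k) auto
  have x0: "real_of_int x \<ge> 0" using b by simp
  have "real_of_int y \<ge> real_of_int x + 1" using xy by simp
  then have "real_of_int y ^ k \<ge> (real_of_int x + 1) ^ k"
    using x0 by (intro power_mono) auto
  moreover have "(real_of_int x + 1) ^ k \<ge> real_of_int x ^ k + real k * real_of_int x ^ (k - 1)"
    using bern[OF x0, of m] m by simp
  moreover have "real_of_int x ^ (k - 1) \<ge> b ^ (k - 1)"
    using b by (intro power_mono) auto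
  moreover have "real k * b ^ (k - 1) \<le> real k * real_of_int x ^ (k - 1)"
    using \<open>real_of_int x ^ (k - 1) \<ge> b ^ (k - 1)\<close> by (intro mult_left_mono) auto
  ultimately show ?thesis by linarith
qed

lemma card_X:
  fixes c P :: real assumes "c > 0" "P \<ge> 0"
  shows "finite {x::int. c * P < of_int x \<and> of_int x \<le> P}"
    and "real (card {x::int. c * P < of_int x \<and> of_int x \<le> P}) \<le> P"
proof -
  have sub: "{x::int. c * P < of_int x \<and> of_int x \<le> P} \<subseteq> {1..\<lfloor>P\<rfloor>}"
  proof
    fix x assume "x \<in> {x::int. c * P < of_int x \<and> of_int x \<le> P}"
    then have "c * P < of_int x" "of_int x \<le> P" by auto
    moreover have "c * P \<ge> 0" using assms by simp
    ultimately show "x \<in> {1..\<lfloor>P\<rfloor>}" by (auto simp: le_floor_iff)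
  qed
  then show "finite {x::int. c * P < of_int x \<and> of_int x \<le> P}" by (rule finite_subset) simp
  then have "card {x::int. c * P < of_int x \<and> of_int x \<le> P} \<le> card {1..\<lfloor>P\<rfloor>}"
    using sub by (intro card_mono) auto
  also have "card {1..\<lfloor>P\<rfloor>} = nat \<lfloor>P\<rfloor>" by simp
  finally have "real (card {x::int. c * P < of_int x \<and> of_int x \<le> P}) \<le> real (nat \<lfloor>P\<rfloor>)" by simp
  also have "\<dots> \<le> P" using assms by simp
  finally show "real (card {x::int. c * P < of_int x \<and> of_int x \<le> P}) \<le> P" .
qed

lemma transl:
  fixes v :: "real \<Rightarrow> 'b::euclidean_space"
  assumes vm: "v \<in> borel_measurable lebesgue" and vi: "integrable lebesgue v"
  shows "(\<lambda>t. v (a + t)) \<in> borel_measurable lebesgue"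
    and "integrable lebesgue (\<lambda>t. v (a + t))"
    and "(\<integral>t. v (a + t) \<partial>lebesgue) = (\<integral>t. v t \<partial>lebesgue)"
  using borel_measurable_affine[OF vm, of 1 a] lebesgue_integrable_real_affine[OF vi, of 1 a]
    lebesgue_integral_real_affine[of 1 v a] by auto

lemma K1_le: "\<delta> > 0 \<Longrightarrow> 0 \<le> K1 \<delta> \<alpha> \<and> K1 \<delta> \<alpha> \<le> 1"
proof -
  assume d: "\<delta> > 0"
  show ?thesis
  proof (cases "\<alpha> = 0")
    case False
    define y where "y = pi * \<delta> * \<alpha>"
    have y0: "y \<noteq> 0" using d False by (simp add: y_def)
    have "\<bar>sin y\<bar> \<le> \<bar>y\<bar>" by (rule abs_sin_x_le_abs_x)
    then have "\<bar>sin y / y\<bar> \<le> 1" using y0 by (simp add: divide_le_eq_1)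
    then have "\<bar>sin y / y\<bar>\<^sup>2 \<le> 1" by (intro power_le_one) auto
    then have "(sin y / y)\<^sup>2 \<le> 1" by (simp add: power_divide)
    then show ?thesis using False by (simp add: K1_def y_def)
  qed (simp add: K1_def)
qed


theorem lemma2p2:
  fixes k :: nat and c lam :: real
  assumes "k \<ge> 2" and "c > 0" and "lam \<noteq> 0"
  shows "\<exists>N0::real. \<forall>N \<ge> N0. \<forall>\<delta> M :: real. \<forall>Z :: real set. \<forall>\<eta> :: real \<Rightarrow> complex.
     0 < \<delta> \<longrightarrow> \<delta> \<le> 1 \<longrightarrow>
     M \<le> \<bar>lam\<bar> * (real k - 1) * (c * N powr (1 / real k)) ^ (k - 1) \<longrightarrow>
     Z \<in> sets lebesgue \<longrightarrow> Z \<subseteq> {N..N + M} \<longrightarrow>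
     set_borel_measurable lebesgue Z \<eta> \<longrightarrow>
     (\<forall>\<mu>\<in>Z. cmod (\<eta> \<mu>) = 1) \<longrightarrow>
     (\<integral>\<^sup>+ \<alpha>. ennreal ((cmod (fc k c (N powr (1 / real k)) (lam * \<alpha>) * H \<eta> Z \<alpha>))\<^sup>2 * K1 \<delta> \<alpha>) \<partial>lborel)
       \<le> ennreal (2 * N powr (1 / real k) * measure lebesgue Z)"
proof (intro exI[of _ 1] allI impI)
  fix N \<delta> M :: real and Z :: "real set" and \<eta> :: "real \<Rightarrow> complex"
  assume N: "N \<ge> 1" and d: "0 < \<delta>" "\<delta> \<le> 1"
    and M: "M \<le> \<bar>lam\<bar> * (real k - 1) * (c * N powr (1 / real k)) ^ (k - 1)"
    and Zs: "Z \<in> sets lebesgue" and ZNM: "Z \<subseteq> {N..N + M}"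
    and \<eta>m: "set_borel_measurable lebesgue Z \<eta>" and \<eta>1: "\<forall>\<mu>\<in>Z. cmod (\<eta> \<mu>) = 1"
  define P where "P = N powr (1 / real k)"
  have P0: "P > 0" using N by (simp add: P_def)
  define X where "X = {x::int. c * P < of_int x \<and> of_int x \<le> P}"
  define a where "a x = lam * of_int x ^ k" for x :: int
  define v where "v \<mu> = indicator Z \<mu> *\<^sub>R \<eta> \<mu>" for \<mu>
  define w0 where "w0 t = (\<Sum>x\<in>X. v (a x + t))" for t
  have Xf: "finite X" and Xc: "real (card X) \<le> P"
    unfolding X_def using card_X[of c P] assms P0 by auto
  have vm: "v \<in> borel_measurable lebesgue"
    using \<eta>m unfolding set_borel_measurable_def v_def .
  have vb: "cmod (v \<mu>) \<le> indicator Z \<mu>" for \<mu>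
    using \<eta>1 by (auto simp: v_def indicator_def)
  have Zfin: "emeasure lebesgue Z < \<infinity>"
  proof -
    have "emeasure lebesgue Z \<le> emeasure lebesgue {N..N+M}"
      using ZNM by (intro emeasure_mono) auto
    also have "\<dots> < \<infinity>" by (simp add: emeasure_lborel_Icc_eq)
    finally show ?thesis .
  qed
  have vi: "integrable lebesgue v"
  proof -
    have "integrable lebesgue (indicator Z :: real \<Rightarrow> real)" using Zs Zfin by simp
    then show ?thesis
      by (rule Bochner_Integration.integrable_bound) (use vm vb in \<open>auto intro!: AE_I2\<close>)
  qed
  have em: "(\<lambda>t. e (c1 * t + c2)) \<in> borel_measurable lebesgue" for c1 c2
    by (rule measurable_completion) measurable
  have Mc: "M \<le> \<bar>lam\<bar> * (real k - 1) * (c * P) ^ (k - 1)" using M by (simp add: P_def)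
  have B0: "(c * P) ^ (k - 1) > 0" using P0 assms by simp
  have big: "\<bar>a y - a x\<bar> > M" if xy: "x < y" "x \<in> X" "y \<in> X" for x y
  proof -
    have g: "real_of_int y ^ k - real_of_int x ^ k \<ge> real k * (c * P) ^ (k - 1)"
      using xy assms P0 by (intro gap) (auto simp: X_def)
    have "\<bar>a y - a x\<bar> = \<bar>lam\<bar> * \<bar>real_of_int y ^ k - real_of_int x ^ k\<bar>"
      by (simp add: a_def abs_mult[symmetric] algebra_simps)
    also have "\<dots> \<ge> \<bar>lam\<bar> * (real k * (c * P) ^ (k - 1))"
      using g by (intro mult_left_mono) auto
    finally have 1: "\<bar>a y - a x\<bar> \<ge> \<bar>lam\<bar> * (real k * (c * P) ^ (k - 1))" .
    have "\<bar>lam\<bar> * (real k - 1) * (c * P) ^ (k - 1) < \<bar>lam\<bar> * (real k * (c * P) ^ (k - 1))"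
      using B0 assms by (simp add: algebra_simps)
    then show ?thesis using 1 Mc by linarith
  qed
  have disj: "x = y" if "x \<in> X" "y \<in> X" "t + a x \<in> Z" "t + a y \<in> Z" for x y t
  proof (rule ccontr)
    assume "x \<noteq> y"
    have "t + a x \<in> {N..N+M}" "t + a y \<in> {N..N+M}" using that ZNM by auto
    then have "\<bar>a y - a x\<bar> \<le> M" by auto
    moreover have "\<bar>a y - a x\<bar> > M"
    proof (cases "x < y")
      case True then show ?thesis using big that by blast
    next
      case False
      then have "y < x" using \<open>x \<noteq> y\<close> by simp
      then have "\<bar>a x - a y\<bar> > M" using big that by blast
      then show ?thesis by simp
    qed
    ultimately show False by simp
  qed
  have w0m: "w0 \<in> borel_measurable lebesgue"
    unfolding w0_def by (intro borel_measurable_sum transl(1)[OF vm vi])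
  have w0i: "integrable lebesgue w0"
    unfolding w0_def by (intro Bochner_Integration.integrable_sum transl(2)[OF vm vi])
  have cnt: "(\<Sum>x\<in>X. indicator Z (a x + t) :: real) \<le> 1" for t
  proof -
    have "(\<Sum>x\<in>X. indicator Z (a x + t) :: real) = (\<Sum>x\<in>X. indicator {x. t + a x \<in> Z} x)"
      by (intro sum.cong) (auto simp: indicator_def add.commute)
    also have "\<dots> = real (\<Sum>x\<in>X. (indicator {x. t + a x \<in> Z} x :: nat))"
      by (simp add: indicator_def)
    also have "\<dots> = real (card (X \<inter> {x. t + a x \<in> Z}))"
      using sum_indicator_eq_card[OF Xf] by simp
    also have "card (X \<inter> {x. t + a x \<in> Z}) \<le> Suc 0"
      using Xf disj by (subst card_le_Suc0_iff_eq) auto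
    finally show ?thesis by simp
  qed
  have w0b': "cmod (w0 t) \<le> (\<Sum>x\<in>X. indicator Z (a x + t))" for t
    unfolding w0_def by (rule order.trans[OF norm_sum sum_mono[OF vb]])
  have w0b: "cmod (w0 t) \<le> 1" for t
    using w0b'[of t] cnt[of t] by linarith
  have Zm: "(indicator Z :: real \<Rightarrow> real) \<in> borel_measurable lebesgue" using Zs by simp
  have Zi: "integrable lebesgue (indicator Z :: real \<Rightarrow> real)" using Zs Zfin by simp
  have w0L: "(\<integral>t. cmod (w0 t) \<partial>lebesgue) \<le> real (card X) * measure lebesgue Z"
  proof -
    have "(\<integral>t. cmod (w0 t) \<partial>lebesgue) \<le> (\<integral>t. (\<Sum>x\<in>X. indicator Z (a x + t)) \<partial>lebesgue)"
      by (intro Bochner_Integration.integral_mono Bochner_Integration.integrable_sum transl(2)[OF Zm Zi] w0b') (use w0i in auto)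
    also have "\<dots> = (\<Sum>x\<in>X. (\<integral>t. indicator Z (a x + t) \<partial>lebesgue))"
      by (intro Bochner_Integration.integral_sum transl(2)[OF Zm Zi])
    also have "\<dots> = (\<Sum>x\<in>X. measure lebesgue Z)"
      by (intro sum.cong refl) (simp add: transl(3)[OF Zm Zi])
    finally show ?thesis by simp
  qed
  have F6: "fc k c P (lam * \<alpha>) * H \<eta> Z \<alpha> = (\<integral>t. w0 t * e (-\<alpha>*t) \<partial>lebesgue)" for \<alpha>
  proof -
    have fc_eq: "fc k c P (lam * \<alpha>) = (\<Sum>x\<in>X. e (\<alpha> * a x))"
      unfolding fc_def X_def a_def by (simp add: mult_ac)
    have H_eq: "H \<eta> Z \<alpha> = (\<integral>\<mu>. v \<mu> * e (-\<alpha>*\<mu>) \<partial>lebesgue)"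
      unfolding H_def set_lebesgue_integral_def v_def
      by (intro Bochner_Integration.integral_cong refl) (simp add: scaleR_conv_of_real)
    have each: "e (\<alpha> * a x) * (\<integral>\<mu>. v \<mu> * e (-\<alpha>*\<mu>) \<partial>lebesgue) = (\<integral>t. v (a x + t) * e (-\<alpha>*t) \<partial>lebesgue)"
      and eachi: "integrable lebesgue (\<lambda>t. v (a x + t) * e (-\<alpha>*t))" for x
    proof -
      define g where "g \<mu> = v \<mu> * e ((-\<alpha>) * \<mu> + \<alpha> * a x)" for \<mu>
      have gm: "g \<in> borel_measurable lebesgue" unfolding g_def by (intro borel_measurable_times vm em)
      have gi: "integrable lebesgue g"
        using vi gm by (rule Bochner_Integration.integrable_bound) (auto simp: g_def norm_mult)
      have ga: "g (a x + t) = v (a x + t) * e (-\<alpha>*t)" for t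
        by (simp add: g_def algebra_simps)
      show "integrable lebesgue (\<lambda>t. v (a x + t) * e (-\<alpha>*t))"
        using transl(2)[OF gm gi, of "a x"] by (simp add: ga)
      have "e (\<alpha> * a x) * (\<integral>\<mu>. v \<mu> * e (-\<alpha>*\<mu>) \<partial>lebesgue) = (\<integral>\<mu>. e (\<alpha> * a x) * (v \<mu> * e (-\<alpha>*\<mu>)) \<partial>lebesgue)"
        by (simp add: integral_mult_right_zero)
      also have "\<dots> = (\<integral>\<mu>. g \<mu> \<partial>lebesgue)"
        by (intro Bochner_Integration.integral_cong refl) (simp add: g_def e_add mult_ac)
      also have "\<dots> = (\<integral>t. g (a x + t) \<partial>lebesgue)"
        by (simp add: transl(3)[OF gm gi])
      also have "\<dots> = (\<integral>t. v (a x + t) * e (-\<alpha>*t) \<partial>lebesgue)"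
        by (simp add: ga)
      finally show "e (\<alpha> * a x) * (\<integral>\<mu>. v \<mu> * e (-\<alpha>*\<mu>) \<partial>lebesgue) = (\<integral>t. v (a x + t) * e (-\<alpha>*t) \<partial>lebesgue)" .
    qed
    have "fc k c P (lam * \<alpha>) * H \<eta> Z \<alpha> = (\<Sum>x\<in>X. e (\<alpha> * a x) * (\<integral>\<mu>. v \<mu> * e (-\<alpha>*\<mu>) \<partial>lebesgue))"
      unfolding fc_eq H_eq by (simp add: sum_distrib_right)
    also have "\<dots> = (\<Sum>x\<in>X. (\<integral>t. v (a x + t) * e (-\<alpha>*t) \<partial>lebesgue))"
      by (intro sum.cong refl each)
    also have "\<dots> = (\<integral>t. (\<Sum>x\<in>X. v (a x + t) * e (-\<alpha>*t)) \<partial>lebesgue)"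
      by (rule Bochner_Integration.integral_sum[symmetric]) (rule eachi)
    also have "\<dots> = (\<integral>t. w0 t * e (-\<alpha>*t) \<partial>lebesgue)"
      by (simp add: w0_def sum_distrib_right)
    finally show ?thesis .
  qed
  have "(\<integral>\<^sup>+ \<alpha>. ennreal ((cmod (fc k c P (lam * \<alpha>) * H \<eta> Z \<alpha>))\<^sup>2 * K1 \<delta> \<alpha>) \<partial>lborel)
     \<le> (\<integral>\<^sup>+ \<alpha>. ennreal ((cmod (\<integral>t. w0 t * e (-\<alpha>*t) \<partial>lebesgue))\<^sup>2) \<partial>lborel)"
    unfolding F6 using K1_le[OF d(1)]
    by (intro nn_integral_mono ennreal_leI) (auto intro!: mult_left_le)
  also have "\<dots> \<le> ennreal (\<integral>t. cmod (w0 t) \<partial>lebesgue)"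
    by (rule core_leb[OF w0m w0i w0b])
  also have "\<dots> \<le> ennreal (2 * P * measure lebesgue Z)"
  proof (rule ennreal_leI)
    have "real (card X) * measure lebesgue Z \<le> P * measure lebesgue Z"
      using Xc by (intro mult_right_mono) auto
    also have "\<dots> \<le> 2 * P * measure lebesgue Z" using P0 by simp
    finally show "(\<integral>t. cmod (w0 t) \<partial>lebesgue) \<le> 2 * P * measure lebesgue Z"
      using w0L by linarith
  qed
  finally show "(\<integral>\<^sup>+ \<alpha>. ennreal ((cmod (fc k c (N powr (1 / real k)) (lam * \<alpha>) * H \<eta> Z \<alpha>))\<^sup>2 * K1 \<delta> \<alpha>) \<partial>lborel)
       \<le> ennreal (2 * N powr (1 / real k) * measure lebesgue Z)"
    unfolding P_def .
qed

end
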